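(* Let $1<n\leq\infty$. Then there is $g\in L_\infty(\Omega_n)$ with $\mathrm{Diam}(g(\Omega_n))=1$ and $\widetilde\Lambda_n=\sup_{z\in\mathbb{C}}\frac{1}{\|g-z\|_1}$.
   Context: For $n\in\mathbb{N}$, $(\Omega_n,\mu_n)$ is $\{1,\dots,n\}$ with normalized counting measure; $(\Omega_\infty,\mu_\infty)$ is $[0,1]$ with Lebesgue measure; $\|\cdot\|_1$ is the $L_1(\Omega_n,\mu_n)$-norm; $\mathrm{Diam}(A)=\sup_{z,w\in A}|z-w|$. For $n>1$: $\widetilde\Lambda_n=2$ if $n\in\{2,4\}$; $\widetilde\Lambda_n=\sqrt3$ if $n=3k$ ($k\in\mathbb{N}$) or $n=\infty$; $\widetilde\Lambda_n=\frac{2\sqrt3}{\sqrt{\frac{3k-3}{3k+1}}+\frac{3k+3}{3k+1}}$ if $n=3k+1\neq4$; $\widetilde\Lambda_n=\frac{2\sqrt3}{\sqrt{\frac{3k+6}{3k+2}}+\frac{3k}{3k+2}}$ if $n=3k+2$ ($k\in\mathbb{N}$). *)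

theory Defs
  imports "HOL-Analysis.Analysis" "HOL-Library.Extended_Nat"
begin

definition Omega_mu :: "enat \<Rightarrow> real measure" where
  "Omega_mu n = (case n of
      enat m \<Rightarrow> uniform_count_measure (real ` {1..m})
    | \<infinity> \<Rightarrow> restrict_space lborel {0..1})"

definition Linfty :: "real measure \<Rightarrow> (real \<Rightarrow> complex) set" where
  "Linfty M = {g. g \<in> borel_measurable M \<and> (\<exists>C. AE x in M. cmod (g x) \<le> C)}"

text \<open>The image g(Omega) of an L_infinity class, i.e. the essential range
  (for finite n this is the ordinary range, every point having positive mass).\<close>
definition ess_range :: "real measure \<Rightarrow> (real \<Rightarrow> complex) \<Rightarrow> complex set" where
  "ess_range M g = {y. \<forall>e>0. emeasure M {x \<in> space M. dist (g x) y < e} \<noteq> 0}"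

definition L1norm :: "real measure \<Rightarrow> (real \<Rightarrow> complex) \<Rightarrow> real" where
  "L1norm M f = (\<integral>x. cmod (f x) \<partial>M)"

definition Lambda_tilde :: "enat \<Rightarrow> real" where
  "Lambda_tilde n = (case n of
      \<infinity> \<Rightarrow> sqrt 3
    | enat m \<Rightarrow>
        (if m = 2 \<or> m = 4 then 2
         else if m mod 3 = 0 then sqrt 3
         else if m mod 3 = 1 then
           (let k = real ((m - 1) div 3) in
             2 * sqrt 3 / (sqrt ((3*k - 3) / (3*k + 1)) + (3*k + 3) / (3*k + 1)))
         else
           (let k = real ((m - 2) div 3) in
             2 * sqrt 3 / (sqrt ((3*k + 6) / (3*k + 2)) + (3*k) / (3*k + 2)))))"

end

theory Submission
  imports Defs "HOL-Analysis.Analysis"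
begin


lemma cmod_ge_lin:
  assumes "u1^2 + u2^2 \<le> 1"
  shows "u1 * Re w + u2 * Im w \<le> cmod w"
proof -
  have "(u1 * Re w + u2 * Im w)^2 \<le> (u1^2 + u2^2) * ((Re w)^2 + (Im w)^2)"
  proof -
    have "(u1^2 + u2^2) * ((Re w)^2 + (Im w)^2) - (u1 * Re w + u2 * Im w)^2 = (u1 * Im w - u2 * Re w)^2"
      by (simp add: power2_eq_square algebra_simps)
    then show ?thesis by (smt (verit) zero_le_power2)
  qed
  also have "\<dots> \<le> 1 * ((Re w)^2 + (Im w)^2)"
    by (rule mult_right_mono[OF assms]) simp
  finally have "(u1 * Re w + u2 * Im w)^2 \<le> (Re w)^2 + (Im w)^2" by simp
  then show ?thesis unfolding cmod_def by (rule real_le_rsqrt)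
qed

definition tq :: "real \<Rightarrow> real \<Rightarrow> real" where "tq a b = sqrt (4*b^2 - a^2)"
definition tt :: "real \<Rightarrow> real \<Rightarrow> real" where "tt a b = a / (2 * tq a b)"
definition PA :: "real \<Rightarrow> real \<Rightarrow> complex" where "PA a b = Complex 0 (sqrt 3 / 2 - tt a b)"
definition PB :: "real \<Rightarrow> real \<Rightarrow> complex" where "PB a b = Complex (-1/2) (- tt a b)"
definition PC :: "real \<Rightarrow> real \<Rightarrow> complex" where "PC a b = Complex (1/2) (- tt a b)"

lemma geo:
  fixes a b :: real
  assumes a: "a > 0" and b: "b > 0" and ab: "a < 2*b" and ab3: "a^2 \<le> 3*b^2"
  shows "a * cmod (PA a b - z) + b * cmod (PB a b - z) + b * cmod (PC a b - z) \<ge> (a * sqrt 3 + tq a b) / 2"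
    and "a * cmod (PA a b) + b * cmod (PB a b) + b * cmod (PC a b) = (a * sqrt 3 + tq a b) / 2"
proof -
  define q where "q = tq a b"
  define t where "t = tt a b"
  have h4: "a^2 < 4*b^2" using ab3 b by (smt (verit) zero_less_power)
  have q2: "q^2 = 4*b^2 - a^2" unfolding q_def tq_def using h4 by simp
  have qpos: "q > 0" unfolding q_def tq_def using h4 by simp
  have t: "t = a / (2*q)" unfolding t_def tt_def q_def ..
  define s where "s = q / (2*b)"
  define c where "c = a / (2*b)"
  have sc: "s^2 + c^2 = 1" unfolding s_def c_def using q2 b
    by (simp add: power_divide field_simps)
  have sc': "(-s)^2 + (-c)^2 \<le> 1" "s^2 + (-c)^2 \<le> 1" using sc by simp_all
  obtain x y where z: "z = Complex x y" by (metis complex.exhaust_sel)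
  have hA: "sqrt 3 / 2 - t - y \<le> cmod (PA a b - z)"
    using cmod_ge_lin[of 0 1 "PA a b - z"] by (simp add: PA_def z t_def)
  have hB: "(-s) * (-1/2 - x) + (-c) * (-t - y) \<le> cmod (PB a b - z)"
    using cmod_ge_lin[OF sc'(1), of "PB a b - z"] by (simp add: PB_def z t_def)
  have hC: "s * (1/2 - x) + (-c) * (-t - y) \<le> cmod (PC a b - z)"
    using cmod_ge_lin[OF sc'(2), of "PC a b - z"] by (simp add: PC_def z t_def)
  have "a * (sqrt 3 / 2 - t - y) + b * ((-s) * (-1/2 - x) + (-c) * (-t - y))
        + b * (s * (1/2 - x) + (-c) * (-t - y)) = (a * sqrt 3 + q) / 2"
    unfolding s_def c_def t using b qpos q2 by (simp add: field_simps power2_eq_square)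
  moreover have "a * (sqrt 3 / 2 - t - y) \<le> a * cmod (PA a b - z)"
    using hA a by (simp add: mult_left_mono)
  moreover have "b * ((-s) * (-1/2 - x) + (-c) * (-t - y)) \<le> b * cmod (PB a b - z)"
    using hB b by (simp add: mult_left_mono)
  moreover have "b * (s * (1/2 - x) + (-c) * (-t - y)) \<le> b * cmod (PC a b - z)"
    using hC b by (simp add: mult_left_mono)
  ultimately show "a * cmod (PA a b - z) + b * cmod (PB a b - z) + b * cmod (PC a b - z) \<ge> (a * sqrt 3 + tq a b) / 2"
    unfolding q_def by linarith
  have tle: "t \<le> sqrt 3 / 2"
  proof -
    have "(2*t)^2 \<le> 3" unfolding t using qpos q2 ab3 a
      by (simp add: power_divide field_simps)
    then have "2*t \<le> sqrt 3" by (rule real_le_rsqrt)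
    then show ?thesis by simp
  qed
  have cA: "cmod (PA a b) = sqrt 3 / 2 - t" using tle by (simp add: PA_def cmod_def t_def)
  have "(1/2)^2 + t^2 = (b/q)^2" unfolding t using qpos q2 by (simp add: power_divide field_simps)
  then have e: "sqrt ((1/2)^2 + t^2) = b / q" using b qpos by simp
  have cB: "cmod (PB a b) = b / q" "cmod (PC a b) = b/q"
    using e by (simp_all add: PB_def PC_def cmod_def t_def)
  show "a * cmod (PA a b) + b * cmod (PB a b) + b * cmod (PC a b) = (a * sqrt 3 + tq a b) / 2"
    unfolding cA cB q_def[symmetric] t using qpos q2 by (simp add: field_simps power2_eq_square)
qed



definition st3 :: "real \<Rightarrow> real \<Rightarrow> complex \<Rightarrow> complex \<Rightarrow> complex \<Rightarrow> real \<Rightarrow> complex" where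
  "st3 t1 t2 P Q R x = (if x \<le> t1 then P else if x \<le> t2 then Q else R)"

lemma ess_range_vals:
  assumes g: "g \<in> borel_measurable M" and vals: "\<And>x. x \<in> space M \<Longrightarrow> g x \<in> S"
    and fin: "finite S" and ne: "S \<noteq> {}"
    and pos: "\<And>s. s \<in> S \<Longrightarrow> emeasure M {x\<in>space M. g x = s} \<noteq> 0"
  shows "ess_range M g = S"
proof
  show "S \<subseteq> ess_range M g"
  proof
    fix s assume s: "s \<in> S"
    have "emeasure M {x\<in>space M. dist (g x) s < e} \<noteq> 0" if e: "e > 0" for e
    proof
      assume 0: "emeasure M {x\<in>space M. dist (g x) s < e} = 0"
      have "{x\<in>space M. dist (g x) s < e} \<in> sets M" using g by measurable
      moreover have "{x\<in>space M. g x = s} \<subseteq> {x\<in>space M. dist (g x) s < e}" using e by auto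
      ultimately have "emeasure M {x\<in>space M. g x = s} \<le> 0"
        using emeasure_mono 0 by metis
      then show False using pos[OF s] by simp
    qed
    then show "s \<in> ess_range M g" unfolding ess_range_def by auto
  qed
next
  show "ess_range M g \<subseteq> S"
  proof
    fix y assume y: "y \<in> ess_range M g"
    show "y \<in> S"
    proof (rule ccontr)
      assume "y \<notin> S"
      then have ip: "infdist y S > 0" using infdist_pos_not_in_closed[of S y] fin ne finite_imp_closed by auto
      have E: "{x\<in>space M. dist (g x) y < infdist y S} = {}"
        using infdist_le[of "g _" S y] vals by (force simp: dist_commute)
      moreover have "emeasure M {x\<in>space M. dist (g x) y < infdist y S} \<noteq> 0"
        using y ip unfolding ess_range_def by blast
      ultimately show False by (metis emeasure_empty)
    qed
  qed
qed

lemma diam3: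
  fixes P Q R :: complex
  assumes "cmod (P - Q) \<le> 1" "cmod (P - R) \<le> 1" "cmod (Q - R) \<le> 1" "cmod (P - Q) = 1"
  shows "diameter {P, Q, R} = 1"
proof (rule antisym)
  show "diameter {P, Q, R} \<le> 1"
    by (rule diameter_le) (use assms in \<open>auto simp: norm_minus_commute\<close>)
  have "dist P Q \<le> diameter {P, Q, R}"
    by (rule diameter_bounded_bound) (auto intro: finite_imp_bounded)
  then show "1 \<le> diameter {P, Q, R}" using assms by (simp add: dist_norm)
qed

lemma diamPABC: "diameter {PA a b, PB a b, PC a b} = 1"
proof -
  have s: "sqrt 3 * sqrt 3 = 3" by simp
  have "cmod (PA a b - PB a b) = 1" "cmod (PA a b - PC a b) = 1" "cmod (PB a b - PC a b) = 1"
    by (simp_all add: PA_def PB_def PC_def cmod_def power2_eq_square s)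
  then show ?thesis by (intro diam3) auto
qed

lemma sum_st:
  fixes f :: "complex \<Rightarrow> real" and m \<alpha> \<beta> \<gamma> :: nat
  assumes "m = \<alpha> + \<beta> + \<gamma>"
  shows "(\<Sum>i=1..m. f (st3 (real \<alpha>) (real (\<alpha>+\<beta>)) P Q R (real i))) = real \<alpha> * f P + real \<beta> * f Q + real \<gamma> * f R"
proof -
  have e: "(\<lambda>i. f (st3 (real \<alpha>) (real (\<alpha>+\<beta>)) P Q R (real i))) =
     (\<lambda>i. if i \<le> \<alpha> then f P else if i \<le> \<alpha>+\<beta> then f Q else f R)"
    by (auto simp: st3_def simp del: of_nat_add)
  have s1: "{Suc 0..\<alpha>+\<beta>+\<gamma>} \<inter> {i. i \<le> \<alpha>} = {1..\<alpha>}" by auto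
  have s2: "{Suc 0..\<alpha>+\<beta>+\<gamma>} \<inter> - {i. i \<le> \<alpha>} \<inter> {i. i \<le> \<alpha>+\<beta>} = {\<alpha>+1..\<alpha>+\<beta>}" by auto
  have s3: "{Suc 0..\<alpha>+\<beta>+\<gamma>} \<inter> - {i. i \<le> \<alpha>} \<inter> - {i. i \<le> \<alpha>+\<beta>} = {\<alpha>+\<beta>+1..\<alpha>+\<beta>+\<gamma>}" by auto
  show ?thesis unfolding e assms
    by (simp add: sum.If_cases s1 s2 s3)
qed



lemma sup_lemma:
  fixes L :: "complex \<Rightarrow> real"
  assumes "\<And>z. F0 \<le> L z" "L 0 = F0" "F0 > 0"
  shows "(SUP z\<in>UNIV. 1 / L z) = 1 / F0"
proof (rule cSup_eq_maximum)
  show "1 / F0 \<in> range (\<lambda>z. 1 / L z)" using assms(2) by (metis rangeI)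
  fix x assume "x \<in> range (\<lambda>z. 1 / L z)"
  then obtain z where "x = 1 / L z" by auto
  then show "x \<le> 1 / F0" using assms(1)[of z] assms(3) by (simp add: frac_le)
qed

lemma fin_main:
  fixes m \<alpha> \<beta> \<gamma> :: nat and P Q R :: complex and F0 :: real
  assumes m: "m = \<alpha>+\<beta>+\<gamma>" and a1: "\<alpha> \<ge> 1" and b1: "\<beta> \<ge> 1" and gR: "\<gamma> \<ge> 1 \<or> R = Q"
   and F: "\<And>z. F0 \<le> (\<alpha>*cmod(P-z)+\<beta>*cmod(Q-z)+\<gamma>*cmod(R-z))/m"
   and F0: "(\<alpha>*cmod P+\<beta>*cmod Q+\<gamma>*cmod R)/m = F0" and F0pos: "F0 > 0"
   and diam: "diameter {P,Q,R} = 1"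
  shows "\<exists>g \<in> Linfty (Omega_mu (enat m)). diameter (ess_range (Omega_mu (enat m)) g) = 1 \<and>
     1/F0 = (SUP z\<in>(UNIV::complex set). 1 / L1norm (Omega_mu (enat m)) (\<lambda>x. g x - z))"
proof -
  define A where "A = real ` {1..m}"
  define M where "M = uniform_count_measure A"
  define g where "g = st3 (real \<alpha>) (real (\<alpha>+\<beta>)) P Q R"
  have OM: "Omega_mu (enat m) = M" by (simp add: Omega_mu_def M_def A_def)
  have finA: "finite A" by (simp add: A_def)
  have inj: "inj_on real {1..m}" by (simp add: inj_on_def)
  have cardA: "card A = m" unfolding A_def using card_image[OF inj] by simp
  have spM: "space M = A" and seM: "sets M = Pow A"
    by (simp_all add: M_def space_uniform_count_measure sets_uniform_count_measure)
  have L1: "L1norm M (\<lambda>x. g x - z) = (\<alpha>*cmod(P-z)+\<beta>*cmod(Q-z)+\<gamma>*cmod(R-z))/m" for z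
  proof -
    have "L1norm M (\<lambda>x. g x - z) = (\<Sum>x\<in>A. cmod (g x - z)) / m"
      unfolding L1norm_def M_def using finA cardA by (simp add: integral_uniform_count_measure)
    also have "(\<Sum>x\<in>A. cmod (g x - z)) = (\<Sum>i=1..m. cmod (g (real i) - z))"
      unfolding A_def using sum.reindex[OF inj, of "\<lambda>x. cmod (g x - z)"] by (simp add: o_def)
    also have "\<dots> = \<alpha>*cmod(P-z)+\<beta>*cmod(Q-z)+\<gamma>*cmod(R-z)"
      unfolding g_def by (rule sum_st[OF m])
    finally show ?thesis .
  qed
  have meas: "g \<in> borel_measurable M"
    by (auto simp: measurable_def spM seM)
  have Linf: "g \<in> Linfty M"
    unfolding Linfty_def using meas
    by (auto intro!: exI[of _ "cmod P + cmod Q + cmod R"] AE_I2 simp: g_def st3_def)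
  have pos: "emeasure M {x\<in>space M. g x = s} \<noteq> 0" if s: "s \<in> {P,Q,R}" for s
  proof -
    have "\<exists>w\<in>A. g w = s"
    proof -
      have w1: "real 1 \<in> A" "real (\<alpha>+1) \<in> A" "real m \<in> A" unfolding A_def
        by (rule imageI, use m a1 b1 in simp)+
      have "g (real 1) = P" using a1 by (simp add: g_def st3_def)
      moreover have "g (real (\<alpha>+1)) = Q" using b1 by (simp add: g_def st3_def)
      moreover have "\<gamma> \<ge> 1 \<Longrightarrow> g (real m) = R" using m by (simp add: g_def st3_def)
      ultimately show ?thesis using s w1 gR by blast
    qed
    then obtain w where w: "w \<in> A" "g w = s" by blast
    have sub: "{x\<in>space M. g x = s} \<subseteq> A" using spM by auto
    have "card {x\<in>space M. g x = s} \<noteq> 0"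
      using w spM finA by (auto simp: card_eq_0_iff)
    then show ?thesis
      unfolding M_def using emeasure_uniform_count_measure[OF finA sub] cardA m a1
      by (simp add: M_def)
  qed
  have ER: "ess_range M g = {P,Q,R}"
    by (rule ess_range_vals[OF meas _ _ _ pos]) (auto simp: g_def st3_def)
  show ?thesis
    unfolding OM
  proof (intro bexI[OF _ Linf] conjI)
    show "diameter (ess_range M g) = 1" using ER diam by simp
    show "1 / F0 = (SUP z\<in>UNIV. 1 / L1norm M (\<lambda>x. g x - z))"
      unfolding L1 using sup_lemma[of F0 "\<lambda>z. (\<alpha>*cmod(P-z)+\<beta>*cmod(Q-z)+\<gamma>*cmod(R-z))/m"] F F0 F0pos
      by simp
  qed
qed



lemma inf_main:
  fixes P Q R :: complex and F0 :: real
  assumes F: "\<And>z. F0 \<le> (cmod(P-z)+cmod(Q-z)+cmod(R-z))/3"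
   and F0: "(cmod P+cmod Q+cmod R)/3 = F0" and F0pos: "F0 > 0"
   and diam: "diameter {P,Q,R} = 1"
  shows "\<exists>g \<in> Linfty (Omega_mu \<infinity>). diameter (ess_range (Omega_mu \<infinity>) g) = 1 \<and>
     1/F0 = (SUP z\<in>(UNIV::complex set). 1 / L1norm (Omega_mu \<infinity>) (\<lambda>x. g x - z))"
proof -
  define M where "M = restrict_space lborel {0..1::real}"
  define g where "g = st3 (1/3) (2/3) P Q R"
  have OM: "Omega_mu \<infinity> = M" by (simp add: Omega_mu_def M_def)
  have spM: "space M = {0..1}" by (simp add: M_def)
  have gb: "g \<in> borel_measurable borel" unfolding g_def st3_def by measurable
  have meas: "g \<in> borel_measurable M" unfolding M_def
    using gb by (simp add: measurable_restrict_space1)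
  have L1: "L1norm M (\<lambda>x. g x - z) = (cmod(P-z)+cmod(Q-z)+cmod(R-z))/3" for z
  proof -
    have "L1norm M (\<lambda>x. g x - z) = integral\<^sup>L lborel (\<lambda>x. indicator {0..1} x *\<^sub>R cmod (g x - z))"
      unfolding L1norm_def M_def by (rule integral_restrict_space) simp
    also have "(\<lambda>x. indicator {0..1} x *\<^sub>R cmod (g x - z)) =
      (\<lambda>x. cmod(P-z) * indicator {0..1/3} x + (cmod(Q-z) * indicator {1/3<..2/3} x
          + cmod(R-z) * indicator {2/3<..1} x))"
      by (auto simp: g_def st3_def indicator_def)
    also have "integral\<^sup>L lborel \<dots> = cmod(P-z) * (1/3) + (cmod(Q-z) * (1/3) + cmod(R-z) * (1/3))"
    proof -
      have i1: "integrable lborel (\<lambda>x. cmod(P-z) * indicator {0..1/3::real} x :: real)"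
        by (intro integrable_mult_right integrable_real_indicator) auto
      have i2: "integrable lborel (\<lambda>x. cmod(Q-z) * indicator {1/3<..2/3::real} x :: real)"
        by (intro integrable_mult_right integrable_real_indicator) auto
      have i3: "integrable lborel (\<lambda>x. cmod(R-z) * indicator {2/3<..1::real} x :: real)"
        by (intro integrable_mult_right integrable_real_indicator) auto
      show ?thesis
        by (simp only: Bochner_Integration.integral_add[OF i1 Bochner_Integration.integrable_add[OF i2 i3]] Bochner_Integration.integral_add[OF i2 i3]
             integral_mult_right_zero integral_indicator) simp
    qed
    finally show ?thesis by simp
  qed
  have Linf: "g \<in> Linfty M"
    unfolding Linfty_def using meas
    by (auto intro!: exI[of _ "cmod P + cmod Q + cmod R"] AE_I2 simp: g_def st3_def)
  have pos: "emeasure M {x\<in>space M. g x = s} \<noteq> 0" if s: "s \<in> {P,Q,R}" for s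
  proof -
    have "\<exists>I. I \<subseteq> {x\<in>space M. g x = s} \<and> I \<subseteq> {0..1} \<and> I \<in> sets lborel \<and> emeasure lborel I = ennreal (1/3)"
    proof -
      have "{0..1/3} \<subseteq> {x\<in>space M. g x = P}" by (auto simp: spM g_def st3_def)
      moreover have "{1/3<..2/3} \<subseteq> {x\<in>space M. g x = Q}" by (auto simp: spM g_def st3_def)
      moreover have "{2/3<..1} \<subseteq> {x\<in>space M. g x = R}" by (auto simp: spM g_def st3_def)
      ultimately show ?thesis using s
        by (elim insertE emptyE; (intro exI conjI; assumption?)) auto
    qed
    then obtain I where I: "I \<subseteq> {x\<in>space M. g x = s}" "I \<subseteq> {0..1}" "I \<in> sets lborel"
      "emeasure lborel I = ennreal (1/3)" by blast
    have "emeasure M I = ennreal (1/3)" unfolding M_def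
      by (subst emeasure_restrict_space) (use I in auto)
    moreover have "{x\<in>space M. g x = s} \<in> sets M" using meas by measurable
    ultimately have "ennreal (1/3) \<le> emeasure M {x\<in>space M. g x = s}"
      using emeasure_mono[OF I(1)] by metis
    then show ?thesis by (auto simp: ennreal_eq_0_iff)
  qed
  have ER: "ess_range M g = {P,Q,R}"
    by (rule ess_range_vals[OF meas _ _ _ pos]) (auto simp: g_def st3_def)
  show ?thesis
    unfolding OM
  proof (intro bexI[OF _ Linf] conjI)
    show "diameter (ess_range M g) = 1" using ER diam by simp
    show "1 / F0 = (SUP z\<in>UNIV. 1 / L1norm M (\<lambda>x. g x - z))"
      unfolding L1 using sup_lemma[of F0 "\<lambda>z. (cmod(P-z)+cmod(Q-z)+cmod(R-z))/3"] F F0 F0pos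
      by simp
  qed
qed



lemma fin_tri:
  fixes m \<alpha> \<beta> :: nat and a b \<Lambda> :: real
  assumes m: "m = \<alpha> + \<beta> + \<beta>" and a1: "\<alpha> \<ge> 1" and b1: "\<beta> \<ge> 1"
    and a: "a = real \<alpha> / real m" and b: "b = real \<beta> / real m"
    and ab: "a < 2*b" and ab3: "a^2 \<le> 3*b^2"
    and Lam: "\<Lambda> = 1 / ((a * sqrt 3 + tq a b) / 2)"
  shows "\<exists>g \<in> Linfty (Omega_mu (enat m)). diameter (ess_range (Omega_mu (enat m)) g) = 1 \<and>
     \<Lambda> = (SUP z\<in>(UNIV::complex set). 1 / L1norm (Omega_mu (enat m)) (\<lambda>x. g x - z))"
proof -
  have mpos: "real m > 0" using m a1 by simp
  have apos: "a > 0" and bpos: "b > 0" using a1 b1 mpos by (simp_all add: a b)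
  have e: "(\<alpha>*cmod(P-z)+\<beta>*cmod(Q-z)+\<beta>*cmod(R-z))/m = a*cmod(P-z)+b*cmod(Q-z)+b*cmod(R-z)" for P Q R z
    unfolding a b using mpos by (simp add: field_simps)
  have "a^2 \<le> 4*b^2" using ab3 by (smt (verit) zero_le_power2)
  then have tqnn: "tq a b \<ge> 0" by (simp add: tq_def)
  show ?thesis unfolding Lam
  proof (rule fin_main[OF m a1 b1])
    show "1 \<le> \<beta> \<or> PC a b = PB a b" using b1 by simp
    show "(a * sqrt 3 + tq a b) / 2 \<le> (\<alpha>*cmod(PA a b-z)+\<beta>*cmod(PB a b-z)+\<beta>*cmod(PC a b-z))/m" for z
      unfolding e using geo(1)[OF apos bpos ab ab3] by simp
    show "(\<alpha>*cmod (PA a b)+\<beta>*cmod (PB a b)+\<beta>*cmod (PC a b))/m = (a * sqrt 3 + tq a b) / 2"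
      using e[of "PA a b" 0 "PB a b" "PC a b"] geo(2)[OF apos bpos ab ab3] by simp
    show "(a * sqrt 3 + tq a b) / 2 > 0" using apos tqnn by (simp add: add_pos_nonneg)
    show "diameter {PA a b, PB a b, PC a b} = 1" by (rule diamPABC)
  qed
qed

lemma fin_seg:
  fixes m \<alpha> \<beta> :: nat
  assumes m: "m = \<alpha> + \<beta> + \<gamma>" and a1: "\<alpha> \<ge> 1" and b1: "\<beta> \<ge> 1" and eq: "real \<alpha> = real m / 2"
    and Lam: "\<Lambda> = 2"
  shows "\<exists>g \<in> Linfty (Omega_mu (enat m)). diameter (ess_range (Omega_mu (enat m)) g) = 1 \<and>
     \<Lambda> = (SUP z\<in>(UNIV::complex set). 1 / L1norm (Omega_mu (enat m)) (\<lambda>x. g x - z))"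
proof -
  have mpos: "real m > 0" using m a1 by simp
  have bg: "real \<beta> + real \<gamma> = real m / 2" using m eq by simp
  have e: "(\<alpha>*cmod(0-z)+\<beta>*cmod(1-z)+\<gamma>*cmod(1-z))/m = (cmod(0-z) + cmod(1-z))/2" for z
  proof -
    have "(\<alpha>*cmod(0-z)+\<beta>*cmod(1-z)+\<gamma>*cmod(1-z))/m = (\<alpha>*cmod(0-z)+(real \<beta>+real \<gamma>)*cmod(1-z))/m"
      by (simp add: algebra_simps)
    also have "\<dots> = (m/2*cmod(0-z)+(m/2)*cmod(1-z))/m" by (simp only: eq bg)
    also have "\<dots> = (cmod(0-z) + cmod(1-z))/2" using mpos by (simp add: field_simps)
    finally show ?thesis .
  qed
  have "\<exists>g \<in> Linfty (Omega_mu (enat m)). diameter (ess_range (Omega_mu (enat m)) g) = 1 \<and>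
     1/(1/2) = (SUP z\<in>(UNIV::complex set). 1 / L1norm (Omega_mu (enat m)) (\<lambda>x. g x - z))"
  proof (rule fin_main[OF m a1 b1])
    show "1 \<le> \<gamma> \<or> (1::complex) = 1" by simp
    show "1/2 \<le> (\<alpha>*cmod(0-z)+\<beta>*cmod(1-z)+\<gamma>*cmod(1-z))/m" for z
      unfolding e using norm_triangle_ineq4[of "1 - z" "0 - z"] by simp
    show "(\<alpha>*cmod (0::complex)+\<beta>*cmod (1::complex)+\<gamma>*cmod (1::complex))/m = 1/2"
      using e[of 0] by simp
    show "(1/2::real) > 0" by simp
    show "diameter {0::complex, 1, 1} = 1" by (rule diam3) auto
  qed
  then show ?thesis using Lam by simp
qed



lemma s3: "sqrt 3 * sqrt 3 = 3" by simp
lemma s3': "sqrt 3 * (sqrt 3 * x) = 3 * x" by (simp add: mult.assoc[symmetric])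

lemma alg0: "sqrt 3 = 1 / (((1/3) * sqrt 3 + tq (1/3) (1/3)) / 2)"
proof -
  have "tq (1/3) (1/3) = sqrt (1/3)" by (simp add: tq_def power2_eq_square)
  also have "\<dots> = sqrt 3 / 3" using s3 by (simp add: real_sqrt_divide field_simps)
  finally show ?thesis using s3 by (simp add: field_simps)
qed

lemma cancel2: fixes c n Y :: real assumes "c \<noteq> 0" "n \<noteq> 0" "Y \<noteq> 0"
  shows "2*c/(c*Y/n) = 2*n/Y" using assms by (simp add: field_simps)

lemma sqrt_div_sq: "x \<ge> 0 \<Longrightarrow> n > 0 \<Longrightarrow> sqrt (x / n^2) = sqrt x / n"
  by (simp add: real_sqrt_divide)

lemma alg1:
  fixes k :: real assumes k: "k \<ge> 2"
  shows "2 * sqrt 3 / (sqrt ((3*k - 3) / (3*k + 1)) + (3*k + 3) / (3*k + 1)) =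
     1 / (((k+1)/(3*k+1) * sqrt 3 + tq ((k+1)/(3*k+1)) (k/(3*k+1))) / 2)"
proof -
  define n where "n = 3*k+1"
  define X where "X = (k-1)*(3*k+1)"
  have n: "n > 0" using k by (simp add: n_def)
  have X: "X \<ge> 0" using k by (simp add: X_def)
  have i1: "4*k^2 - (k+1)^2 = X" unfolding X_def by (simp add: power2_eq_square algebra_simps)
  have "tq ((k+1)/n) (k/n) = sqrt ((4*k^2 - (k+1)^2) / n^2)" unfolding tq_def
    by (simp add: power_divide diff_divide_distrib)
  also have "\<dots> = sqrt (X / n^2)" unfolding i1 ..
  also have "\<dots> = sqrt X / n" using X n by (rule sqrt_div_sq)
  finally have t: "tq ((k+1)/n) (k/n) = sqrt X / n" .
  have i2: "3*X = (3*k-3)*n" by (simp add: X_def n_def algebra_simps)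
  have "(3*k - 3) / (3*k + 1) = ((3*k-3)*n) / (n*n)" using n by (simp add: n_def)
  then have "sqrt ((3*k - 3) / (3*k + 1)) = sqrt ((3 * X) / n^2)" unfolding i2 by (simp add: power2_eq_square)
  also have "\<dots> = sqrt 3 * sqrt X / n" using X n by (simp add: sqrt_div_sq real_sqrt_mult)
  finally have u: "sqrt ((3*k - 3) / (3*k + 1)) = sqrt 3 * sqrt X / n" .
  have sX: "sqrt X \<ge> 0" using X by simp
  have pos: "sqrt X + sqrt 3 * (k+1) > 0" using sX k by (smt (verit) mult_pos_pos real_sqrt_gt_zero)
  have "2 * sqrt 3 / (sqrt 3 * sqrt X / n + 3*(k + 1) / n) = 2 * n / (sqrt X + sqrt 3 * (k+1))"
  proof -
    have d: "sqrt 3 * sqrt X / n + 3*(k + 1) / n = sqrt 3 * (sqrt X + sqrt 3 * (k+1)) / n"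
      by (simp add: distrib_left s3' add_divide_distrib)
    show ?thesis unfolding d using n pos by (intro cancel2) auto
  qed
  moreover have "2 * sqrt 3 / (sqrt ((3*k - 3) / (3*k + 1)) + (3*k + 3) / (3*k + 1)) =
      2 * sqrt 3 / (sqrt 3 * sqrt X / n + 3*(k + 1) / n)" unfolding u by (simp add: n_def algebra_simps)
  moreover have "1 / (((k+1)/(3*k+1) * sqrt 3 + tq ((k+1)/(3*k+1)) (k/(3*k+1))) / 2) = 2 * n / (sqrt X + sqrt 3 * (k+1))"
    unfolding n_def[symmetric] t using n pos by (simp add: field_simps)
  ultimately show ?thesis by simp
qed

lemma alg2:
  fixes k :: real assumes k: "k \<ge> 1"
  shows "2 * sqrt 3 / (sqrt ((3*k + 6) / (3*k + 2)) + (3*k) / (3*k + 2)) =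
     1 / ((k/(3*k+2) * sqrt 3 + tq (k/(3*k+2)) ((k+1)/(3*k+2))) / 2)"
proof -
  define n where "n = 3*k+2"
  define X where "X = (k+2)*(3*k+2)"
  have n: "n > 0" using k by (simp add: n_def)
  have X: "X \<ge> 0" using k by (simp add: X_def)
  have i1: "4*(k+1)^2 - k^2 = X" unfolding X_def by (simp add: power2_eq_square algebra_simps)
  have "tq (k/n) ((k+1)/n) = sqrt ((4*(k+1)^2 - k^2) / n^2)" unfolding tq_def
    by (simp add: power_divide diff_divide_distrib)
  also have "\<dots> = sqrt (X / n^2)" unfolding i1 ..
  also have "\<dots> = sqrt X / n" using X n by (rule sqrt_div_sq)
  finally have t: "tq (k/n) ((k+1)/n) = sqrt X / n" .
  have i2: "3*X = (3*k+6)*n" by (simp add: X_def n_def algebra_simps)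
  have "(3*k + 6) / (3*k + 2) = ((3*k+6)*n) / (n*n)" using n by (simp add: n_def)
  then have "sqrt ((3*k + 6) / (3*k + 2)) = sqrt ((3 * X) / n^2)" unfolding i2 by (simp add: power2_eq_square)
  also have "\<dots> = sqrt 3 * sqrt X / n" using X n by (simp add: sqrt_div_sq real_sqrt_mult)
  finally have u: "sqrt ((3*k + 6) / (3*k + 2)) = sqrt 3 * sqrt X / n" .
  have sX: "sqrt X \<ge> 0" using X by simp
  have pos: "sqrt X + sqrt 3 * k > 0" using sX k by (smt (verit) mult_pos_pos real_sqrt_gt_zero)
  have "2 * sqrt 3 / (sqrt 3 * sqrt X / n + 3*k / n) = 2 * n / (sqrt X + sqrt 3 * k)"
  proof -
    have d: "sqrt 3 * sqrt X / n + 3*k / n = sqrt 3 * (sqrt X + sqrt 3 * k) / n"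
      by (simp add: distrib_left s3' add_divide_distrib)
    show ?thesis unfolding d using n pos by (intro cancel2) auto
  qed
  moreover have "2 * sqrt 3 / (sqrt ((3*k + 6) / (3*k + 2)) + (3*k) / (3*k + 2)) =
      2 * sqrt 3 / (sqrt 3 * sqrt X / n + 3*k / n)" unfolding u by (simp add: n_def algebra_simps)
  moreover have "1 / ((k/(3*k+2) * sqrt 3 + tq (k/(3*k+2)) ((k+1)/(3*k+2))) / 2) = 2 * n / (sqrt X + sqrt 3 * k)"
    unfolding n_def[symmetric] t using n pos by (simp add: field_simps)
  ultimately show ?thesis by simp
qed



theorem lemmaA2:
  fixes n :: enat
  assumes "1 < n"
  shows "\<exists>g \<in> Linfty (Omega_mu n).
           diameter (ess_range (Omega_mu n) g) = 1 \<and>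
           Lambda_tilde n = (SUP z\<in>(UNIV::complex set). 1 / L1norm (Omega_mu n) (\<lambda>x. g x - z))"
proof (cases n)
  case infinity
  have a: "(0::real) < 1/3" "(1/3::real) < 2*(1/3)" "(1/3::real)^2 \<le> 3*(1/3)^2" by simp_all
  have e: "(cmod(P-z)+cmod(Q-z)+cmod(R-z))/3 = 1/3*cmod(P-z)+1/3*cmod(Q-z)+1/3*cmod(R-z)" for P Q R z
    by simp
  have "\<exists>g \<in> Linfty (Omega_mu \<infinity>). diameter (ess_range (Omega_mu \<infinity>) g) = 1 \<and>
     1/((1/3 * sqrt 3 + tq (1/3) (1/3))/2) = (SUP z\<in>(UNIV::complex set). 1 / L1norm (Omega_mu \<infinity>) (\<lambda>x. g x - z))"
  proof (rule inf_main)
    show "(1/3 * sqrt 3 + tq (1/3) (1/3))/2 \<le> (cmod(PA (1/3) (1/3)-z)+cmod(PB (1/3) (1/3)-z)+cmod(PC (1/3) (1/3)-z))/3" for z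
      unfolding e using geo(1)[OF a(1) a(1) a(2) a(3)] by simp
    show "(cmod (PA (1/3) (1/3))+cmod (PB (1/3) (1/3))+cmod (PC (1/3) (1/3)))/3 = (1/3 * sqrt 3 + tq (1/3) (1/3))/2"
      using e[of "PA (1/3) (1/3)" 0 "PB (1/3) (1/3)" "PC (1/3) (1/3)"] geo(2)[OF a(1) a(1) a(2) a(3)] by simp
    show "(1/3 * sqrt 3 + tq (1/3) (1/3))/2 > 0" by (simp add: tq_def power2_eq_square add_pos_pos)
    show "diameter {PA (1/3) (1/3), PB (1/3) (1/3), PC (1/3) (1/3)} = 1" by (rule diamPABC)
  qed
  then show ?thesis using infinity alg0 by (simp add: Lambda_tilde_def)
next
  case (enat m)
  with assms have m1: "m > 1" by (simp add: one_enat_def)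
  show ?thesis
  proof (cases "m = 2 \<or> m = 4")
    case True
    have L: "Lambda_tilde (enat m) = 2" using True by (simp add: Lambda_tilde_def)
    from True show ?thesis
    proof
      assume m: "m = 2"
      show ?thesis unfolding enat m by (rule fin_seg[of 2 1 1 0]) (use L m in simp_all)
    next
      assume m: "m = 4"
      show ?thesis unfolding enat m by (rule fin_seg[of 4 2 1 1]) (use L m in simp_all)
    qed
  next
    case False
    define k where "k = m div 3"
    define K where "K = real k"
    consider "m mod 3 = 0" | "m mod 3 = 1" | "m mod 3 = 2" by linarith
    then show ?thesis
    proof cases
      case 1
      have m: "m = k + k + k" using 1 unfolding k_def by presburger
      have k1: "k \<ge> 1" using m m1 by simp
      have L: "Lambda_tilde (enat m) = sqrt 3" using False 1 by (simp add: Lambda_tilde_def)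
      have a: "real k / real m = 1/3" using k1 by (simp add: m)
      show ?thesis unfolding enat
        by (rule fin_tri[OF m k1 k1 refl refl]) (use L a alg0 in simp_all)
    next
      case 2
      have m: "m = (k+1) + k + k" using 2 unfolding k_def by presburger
      have k2: "k \<ge> 2" using m m1 False by simp
      have k1: "k + 1 \<ge> 1" "k \<ge> 1" using k2 by simp_all
      have K2: "K \<ge> 2" using k2 by (simp add: K_def)
      have md: "(m - Suc 0) div 3 = k" using m by simp
      have L: "Lambda_tilde (enat m) =
        2 * sqrt 3 / (sqrt ((3*K - 3) / (3*K + 1)) + (3*K + 3) / (3*K + 1))"
        using False 2 by (simp add: Lambda_tilde_def md K_def Let_def)
      have rm: "real m = 3*K+1" using m by (simp add: K_def)
      have a: "real (k+1) / real m = (K+1)/(3*K+1)" "real k / real m = K/(3*K+1)"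
        using rm by (simp_all add: K_def)
      have np: "3*K+1 > 0" using K2 by simp
      have kk: "2*K \<le> K*K" using mult_right_mono[of 2 K K] K2 by simp
      show ?thesis unfolding enat
      proof (rule fin_tri[OF m k1 refl refl])
        have "(K+1)/(3*K+1) < (2*K)/(3*K+1)" using np K2 by (intro divide_strict_right_mono) auto
        then show "real (k+1) / real m < 2 * (real k / real m)" unfolding a by simp
        have e1: "(K+1)^2 = K*K + 2*K + 1" "3*K^2 = 3*(K*K)" by (simp_all add: power2_eq_square algebra_simps)
        have "(K+1)^2 \<le> 3*K^2" unfolding e1 using kk K2 by linarith
        then have "(K+1)^2/(3*K+1)^2 \<le> 3*K^2/(3*K+1)^2" by (intro divide_right_mono) auto
        then show "(real (k+1) / real m)^2 \<le> 3 * (real k / real m)^2" unfolding a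
          by (simp add: power_divide)
        show "Lambda_tilde (enat m) = 1 / ((real (k+1) / real m * sqrt 3 + tq (real (k+1) / real m) (real k / real m)) / 2)"
          unfolding a L using alg1[OF K2] by simp
      qed
    next
      case 3
      have m: "m = k + (k+1) + (k+1)" using 3 unfolding k_def by presburger
      have k1: "k \<ge> 1" using m m1 False by simp
      have k1': "k+1 \<ge> 1" by simp
      have K1: "K \<ge> 1" using k1 by (simp add: K_def)
      have md: "(m - 2) div 3 = k" using m by simp
      have L: "Lambda_tilde (enat m) =
        2 * sqrt 3 / (sqrt ((3*K + 6) / (3*K + 2)) + (3*K) / (3*K + 2))"
        using False 3 by (simp add: Lambda_tilde_def md K_def Let_def)
      have rm: "real m = 3*K+2" using m by (simp add: K_def)
      have a: "real (k+1) / real m = (K+1)/(3*K+2)" "real k / real m = K/(3*K+2)"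
        using rm by (simp_all add: K_def)
      have np: "3*K+2 > 0" using K1 by simp
      show ?thesis unfolding enat
      proof (rule fin_tri[OF m k1 k1' refl refl])
        have "K/(3*K+2) < (2*(K+1))/(3*K+2)" using np K1 by (intro divide_strict_right_mono) auto
        then show "real k / real m < 2 * (real (k+1) / real m)" unfolding a by simp
        have "K^2 \<le> 3*(K+1)^2" using K1 by (simp add: power2_eq_square algebra_simps)
        then have "K^2/(3*K+2)^2 \<le> 3*(K+1)^2/(3*K+2)^2" by (intro divide_right_mono) auto
        then show "(real k / real m)^2 \<le> 3 * (real (k+1) / real m)^2" unfolding a
          by (simp add: power_divide)
        show "Lambda_tilde (enat m) = 1 / ((real k / real m * sqrt 3 + tq (real k / real m) (real (k+1) / real m)) / 2)"
          unfolding a L using alg2[OF K1] by simp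
      qed
    qed
  qed
qed

end
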